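(* Let $(X,\leq)$ be a poset and $K$ a field. Then (1) $FI(X,K)$ is Lie nilpotent if and only if $X$ is an antichain; (2) the group of units $\mathcal{U}(FI(X,K))$ is nilpotent if and only if either $X$ is an antichain, or $K=\mathbb{F}_2$ and $X$ is bounded.
   Context: $FI(X,K)$ is the finitary incidence algebra: the $K$-vector space of formal sums $\alpha=\sum_{x\leq y}\alpha_{xy}e_{xy}$ ($x,y\in X$, $\alpha_{xy}\in K$) such that for every pair $x<y$ only finitely many $x\leq u<v\leq y$ have $\alpha_{uv}\neq0$, with convolution product $\alpha\beta=\sum_{x\leq y}\big(\sum_{x\leq z\leq y}\alpha_{xz}\beta_{zy}\big)e_{xy}$. An associative algebra $A$ is Lie nilpotent if $\gamma_n(A)=\{0\}$ for some $n$, where $\gamma_1(A)=A$, $\gamma_{n+1}(A)=[\gamma_n(A),A]$ (span of commutators $xy-yx$). $X$ is bounded if the supremum of $|C|-1$ over finite chains $C\subseteq X$ is finite. $\mathbb{F}_2$ is the field with two elements. *)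

theory Defs
  imports "HOL-Algebra.Algebra"
begin

text \<open>Elements of the finitary incidence algebra FI(X,K), X a poset (type of class order),
  K a field, represented as functions alpha x y = alpha_xy, vanishing unless x <= y.\<close>

definition FI :: "('a::order \<Rightarrow> 'a \<Rightarrow> 'k::field) set" where
  "FI = {f. (\<forall>x y. \<not> x \<le> y \<longrightarrow> f x y = 0) \<and>
            (\<forall>x y. x < y \<longrightarrow> finite {(u, v). x \<le> u \<and> u < v \<and> v \<le> y \<and> f u v \<noteq> 0})}"

text \<open>Convolution product; for elements of FI the summation set is finite.\<close>
definition conv :: "('a::order \<Rightarrow> 'a \<Rightarrow> 'k::field) \<Rightarrow> ('a \<Rightarrow> 'a \<Rightarrow> 'k) \<Rightarrow> 'a \<Rightarrow> 'a \<Rightarrow> 'k" where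
  "conv f g = (\<lambda>x y. if x \<le> y then
      (\<Sum>z\<in>{z. x \<le> z \<and> z \<le> y \<and> f x z \<noteq> 0 \<and> g z y \<noteq> 0}. f x z * g z y) else 0)"

definition delta :: "'a::order \<Rightarrow> 'a \<Rightarrow> 'k::field" where
  "delta = (\<lambda>x y. if x = y then 1 else 0)"

inductive_set kspan :: "('a \<Rightarrow> 'a \<Rightarrow> 'k::field) set \<Rightarrow> ('a \<Rightarrow> 'a \<Rightarrow> 'k) set"
  for S where
  kspan_zero: "(\<lambda>x y. 0) \<in> kspan S"
| kspan_step: "s \<in> S \<Longrightarrow> t \<in> kspan S \<Longrightarrow> (\<lambda>x y. c * s x y + t x y) \<in> kspan S"

text \<open>Lower central series of the Lie algebra FI(X,K): lie_gamma n = gamma_(n+1).\<close>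
fun lie_gamma :: "nat \<Rightarrow> ('a::order \<Rightarrow> 'a \<Rightarrow> 'k::field) set" where
  "lie_gamma 0 = FI"
| "lie_gamma (Suc n) =
     kspan {(\<lambda>x y. conv a b x y - conv b a x y) | a b. a \<in> lie_gamma n \<and> b \<in> FI}"

definition lie_nilpotent_FI :: "'a::order itself \<Rightarrow> 'k::field itself \<Rightarrow> bool" where
  "lie_nilpotent_FI _ _ \<longleftrightarrow> (\<exists>n. (lie_gamma n :: ('a \<Rightarrow> 'a \<Rightarrow> 'k) set) = {\<lambda>x y. 0})"

definition FI_monoid :: "('a::order \<Rightarrow> 'a \<Rightarrow> 'k::field) monoid" where
  "FI_monoid = \<lparr>carrier = FI, Group.monoid.mult = conv, one = delta\<rparr>"

fun lcs :: "('g, 'b) monoid_scheme \<Rightarrow> nat \<Rightarrow> 'g set" where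
  "lcs G 0 = carrier G"
| "lcs G (Suc n) = generate G
     {x \<otimes>\<^bsub>G\<^esub> y \<otimes>\<^bsub>G\<^esub> inv\<^bsub>G\<^esub> x \<otimes>\<^bsub>G\<^esub> inv\<^bsub>G\<^esub> y | x y. x \<in> lcs G n \<and> y \<in> carrier G}"

definition nilpotent_group :: "('g, 'b) monoid_scheme \<Rightarrow> bool" where
  "nilpotent_group G \<longleftrightarrow> (\<exists>n. lcs G n = {\<one>\<^bsub>G\<^esub>})"

definition antichain_type :: "'a::order itself \<Rightarrow> bool" where
  "antichain_type _ \<longleftrightarrow> (\<forall>x y :: 'a. x \<le> y \<longrightarrow> x = y)"

text \<open>Bounded: sup of |C|-1 over finite chains C is finite.\<close>
definition bounded_poset :: "'a::order itself \<Rightarrow> bool" where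
  "bounded_poset _ \<longleftrightarrow> (\<exists>N::nat. \<forall>C :: 'a set. finite C \<and> (\<forall>x\<in>C. \<forall>y\<in>C. x \<le> y \<or> y \<le> x)
      \<longrightarrow> card C \<le> N + 1)"

end

theory Submission
  imports Defs
begin


lemma FI_upper: "f \<in> FI \<Longrightarrow> \<not> u \<le> v \<Longrightarrow> f u v = 0"
  by (auto simp: FI_def)

lemma conv_nz: "conv f g u v \<noteq> 0 \<Longrightarrow> \<exists>z. u \<le> z \<and> z \<le> v \<and> f u z \<noteq> 0 \<and> g z v \<noteq> 0"
proof (rule ccontr)
  assume a: "conv f g u v \<noteq> 0" and b: "\<not> (\<exists>z. u \<le> z \<and> z \<le> v \<and> f u z \<noteq> 0 \<and> g z v \<noteq> 0)"
  have "conv f g u v = 0" using b unfolding conv_def by (auto intro!: sum.neutral)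
  with a show False by simp
qed

lemma conv_upper: "\<not> u \<le> v \<Longrightarrow> conv f g u v = 0"
  by (auto simp: conv_def)

lemma row_finite:
  assumes "f \<in> FI" shows "finite {z. x \<le> z \<and> z \<le> y \<and> f x z \<noteq> 0}"
proof (cases "x < y")
  case True
  let ?P = "{(u, v). x \<le> u \<and> u < v \<and> v \<le> y \<and> f u v \<noteq> 0}"
  have "finite ?P" using assms True by (auto simp: FI_def)
  moreover have "{z. x \<le> z \<and> z \<le> y \<and> f x z \<noteq> 0} \<subseteq> insert x (snd ` ?P)"
    by (force simp: image_iff order.order_iff_strict)
  ultimately show ?thesis by (meson finite_imageI finite_insert finite_subset)
next
  case False
  then have "{z. x \<le> z \<and> z \<le> y \<and> f x z \<noteq> 0} \<subseteq> {x}"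
    using order.strict_iff_order order_trans by fastforce
  then show ?thesis using finite_subset by blast
qed

lemma col_finite:
  assumes "f \<in> FI" shows "finite {z. x \<le> z \<and> z \<le> y \<and> f z y \<noteq> 0}"
proof (cases "x < y")
  case True
  let ?P = "{(u, v). x \<le> u \<and> u < v \<and> v \<le> y \<and> f u v \<noteq> 0}"
  have "finite ?P" using assms True by (auto simp: FI_def)
  moreover have "{z. x \<le> z \<and> z \<le> y \<and> f z y \<noteq> 0} \<subseteq> insert y (fst ` ?P)"
    by (force simp: image_iff order.order_iff_strict)
  ultimately show ?thesis by (meson finite_imageI finite_insert finite_subset)
next
  case False
  then have "{z. x \<le> z \<and> z \<le> y \<and> f z y \<noteq> 0} \<subseteq> {y}"
    using order.strict_iff_order order_trans by fastforce
  then show ?thesis using finite_subset by blast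
qed

lemma conv_eq_sum:
  assumes fu: "\<And>a b. \<not> a \<le> b \<Longrightarrow> f a b = 0" and gu: "\<And>a b. \<not> a \<le> b \<Longrightarrow> g a b = 0"
    and I: "finite I" "{z. x \<le> z \<and> z \<le> y \<and> f x z \<noteq> 0 \<and> g z y \<noteq> 0} \<subseteq> I"
  shows "conv f g x y = (\<Sum>z\<in>I. f x z * g z y)"
proof (cases "x \<le> y")
  case True
  have "conv f g x y = (\<Sum>z\<in>{z. x \<le> z \<and> z \<le> y \<and> f x z \<noteq> 0 \<and> g z y \<noteq> 0}. f x z * g z y)"
    using True by (simp add: conv_def)
  also have "\<dots> = (\<Sum>z\<in>I. f x z * g z y)"
    apply (rule sum.mono_neutral_left[OF I(1) I(2)])
    using fu gu by (metis (mono_tags, lifting) DiffE mem_Collect_eq mult_eq_0_iff)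
  finally show ?thesis .
next
  case False
  have "f x z * g z y = 0" for z using fu gu False order_trans by (metis mult_eq_0_iff)
  then show ?thesis using False by (simp add: conv_def sum.neutral)
qed

lemma conv_eq_sum_FI:
  assumes "f \<in> FI" "g \<in> FI" "finite I" "{z. x \<le> z \<and> z \<le> y \<and> f x z \<noteq> 0} \<subseteq> I"
  shows "conv f g x y = (\<Sum>z\<in>I. f x z * g z y)"
  by (rule conv_eq_sum) (use assms FI_upper in auto)

lemma conv_eq_sum_FI':
  assumes "f \<in> FI" "g \<in> FI" "finite I" "{z. x \<le> z \<and> z \<le> y \<and> g z y \<noteq> 0} \<subseteq> I"
  shows "conv f g x y = (\<Sum>z\<in>I. f x z * g z y)"
  by (rule conv_eq_sum) (use assms FI_upper in auto)

lemma FI_I: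
  assumes "\<And>a b. \<not> a \<le> b \<Longrightarrow> f a b = 0"
    and "\<And>x y. x < y \<Longrightarrow> finite {(u, v). x \<le> u \<and> u < v \<and> v \<le> y \<and> f u v \<noteq> 0}"
  shows "f \<in> FI"
  using assms by (auto simp: FI_def)

lemma FI_fin: "f \<in> FI \<Longrightarrow> x < y \<Longrightarrow> finite {(u, v). x \<le> u \<and> u < v \<and> v \<le> y \<and> f u v \<noteq> 0}"
  by (auto simp: FI_def)

lemma conv_FI:
  assumes f: "f \<in> FI" and g: "g \<in> FI" shows "conv f g \<in> FI"
proof (rule FI_I)
  show "\<not> a \<le> b \<Longrightarrow> conv f g a b = 0" for a b by (rule conv_upper)
  fix x y :: 'a assume xy: "x < y"
  let ?Pf = "{(u, v). x \<le> u \<and> u < v \<and> v \<le> y \<and> f u v \<noteq> 0}"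
  let ?Pg = "{(u, v). x \<le> u \<and> u < v \<and> v \<le> y \<and> g u v \<noteq> 0}"
  have "finite ?Pf" "finite ?Pg" using FI_fin[OF f xy] FI_fin[OF g xy] by auto
  then have fin: "finite (?Pf \<union> ?Pg \<union> (\<lambda>(p, q). (fst p, snd q)) ` (?Pf \<times> ?Pg))" by auto
  have key: "(u, v) \<in> ?Pf \<union> ?Pg \<union> (\<lambda>(p, q). (fst p, snd q)) ` (?Pf \<times> ?Pg)"
    if uv: "x \<le> u" "u < v" "v \<le> y" "conv f g u v \<noteq> 0" for u v
  proof -
    from uv obtain z where z: "u \<le> z" "z \<le> v" "f u z \<noteq> 0" "g z v \<noteq> 0" using conv_nz by blast
    show "(u, v) \<in> ?Pf \<union> ?Pg \<union> (\<lambda>(p, q). (fst p, snd q)) ` (?Pf \<times> ?Pg)"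
    proof (cases "z = u")
      case True then show ?thesis using uv z by auto
    next
      case zu: False
      show ?thesis
      proof (cases "z = v")
        case True then show ?thesis using uv z by auto
      next
        case False
        have "((u, z), (z, v)) \<in> ?Pf \<times> ?Pg" using uv z zu False
          by (auto simp: order.strict_iff_order intro: order_trans)
        then show ?thesis by (auto simp: image_iff)
      qed
    qed
  qed
  have "{(u, v). x \<le> u \<and> u < v \<and> v \<le> y \<and> conv f g u v \<noteq> 0}
      \<subseteq> ?Pf \<union> ?Pg \<union> (\<lambda>(p, q). (fst p, snd q)) ` (?Pf \<times> ?Pg)"
    using key by blast
  then show "finite {(u, v). x \<le> u \<and> u < v \<and> v \<le> y \<and> conv f g u v \<noteq> 0}"
    using fin finite_subset by blast
qed

lemma conv_assoc:
  assumes f: "f \<in> FI" and g: "g \<in> FI" and h: "h \<in> FI"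
  shows "conv (conv f g) h = conv f (conv g h)"
proof (intro ext)
  fix x y :: 'a
  define I where "I = {w. x \<le> w \<and> w \<le> y \<and> f x w \<noteq> 0} \<union> {w. x \<le> w \<and> w \<le> y \<and> h w y \<noteq> 0}"
  have finI: "finite I" unfolding I_def using row_finite[OF f] col_finite[OF h] by auto
  have "conv (conv f g) h x y = (\<Sum>z\<in>I. conv f g x z * h z y)"
    by (rule conv_eq_sum) (use conv_upper FI_upper[OF h] finI in \<open>auto simp: I_def\<close>)
  also have "\<dots> = (\<Sum>z\<in>I. (\<Sum>w\<in>I. f x w * g w z) * h z y)"
  proof (rule sum.cong[OF refl])
    fix z assume "z \<in> I"
    then have "z \<le> y" by (auto simp: I_def)
    then have "conv f g x z = (\<Sum>w\<in>I. f x w * g w z)"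
      by (intro conv_eq_sum_FI[OF f g finI]) (auto simp: I_def intro: order_trans)
    then show "conv f g x z * h z y = (\<Sum>w\<in>I. f x w * g w z) * h z y" by simp
  qed
  also have "\<dots> = (\<Sum>w\<in>I. f x w * (\<Sum>z\<in>I. g w z * h z y))"
    by (simp add: sum_distrib_left sum_distrib_right mult.assoc) (rule sum.swap)
  also have "\<dots> = (\<Sum>w\<in>I. f x w * conv g h w y)"
  proof (rule sum.cong[OF refl])
    fix w assume "w \<in> I"
    then have "x \<le> w" by (auto simp: I_def)
    then have "conv g h w y = (\<Sum>z\<in>I. g w z * h z y)"
      by (intro conv_eq_sum_FI'[OF g h finI]) (auto simp: I_def intro: order_trans)
    then show "f x w * (\<Sum>z\<in>I. g w z * h z y) = f x w * conv g h w y" by simp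
  qed
  also have "\<dots> = conv f (conv g h) x y"
    by (rule conv_eq_sum[symmetric]) (use conv_upper FI_upper[OF f] finI in \<open>auto simp: I_def\<close>)
  finally show "conv (conv f g) h x y = conv f (conv g h) x y" .
qed

lemma delta_FI: "delta \<in> FI"
  by (rule FI_I) (auto simp: delta_def)

lemma conv_delta_left:
  assumes "\<And>a b. \<not> a \<le> b \<Longrightarrow> f a b = 0" shows "conv delta f = f"
proof (intro ext)
  fix x y :: 'a
  have "conv delta f x y = (\<Sum>z\<in>{x}. delta x z * f z y)"
    by (rule conv_eq_sum) (use assms in \<open>auto simp: delta_def\<close>)
  then show "conv delta f x y = f x y" by (simp add: delta_def)
qed

lemma conv_delta_right:
  assumes "\<And>a b. \<not> a \<le> b \<Longrightarrow> f a b = 0" shows "conv f delta = f"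
proof (intro ext)
  fix x y :: 'a
  have "conv f delta x y = (\<Sum>z\<in>{y}. f x z * delta z y)"
    by (rule conv_eq_sum) (use assms in \<open>auto simp: delta_def\<close>)
  then show "conv f delta x y = f x y" by (simp add: delta_def)
qed

lemma lin_FI:
  assumes f: "f \<in> FI" and g: "g \<in> FI" shows "(\<lambda>u v. a * f u v + b * g u v) \<in> FI"
proof (rule FI_I)
  show "\<not> u \<le> v \<Longrightarrow> a * f u v + b * g u v = 0" for u v using FI_upper[OF f] FI_upper[OF g] by simp
  fix x y :: 'a assume xy: "x < y"
  have "{(u, v). x \<le> u \<and> u < v \<and> v \<le> y \<and> a * f u v + b * g u v \<noteq> 0}
    \<subseteq> {(u, v). x \<le> u \<and> u < v \<and> v \<le> y \<and> f u v \<noteq> 0} \<union> {(u, v). x \<le> u \<and> u < v \<and> v \<le> y \<and> g u v \<noteq> 0}"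
    by auto
  then show "finite {(u, v). x \<le> u \<and> u < v \<and> v \<le> y \<and> a * f u v + b * g u v \<noteq> 0}"
    using FI_fin[OF f xy] FI_fin[OF g xy] finite_subset by blast
qed

lemma conv_lin_left:
  assumes f: "f \<in> FI" and g: "g \<in> FI" and h: "h \<in> FI"
  shows "conv (\<lambda>u v. a * f u v + b * g u v) h = (\<lambda>u v. a * conv f h u v + b * conv g h u v)"
proof (intro ext)
  fix x y :: 'a
  define I where "I = {w. x \<le> w \<and> w \<le> y \<and> f x w \<noteq> 0} \<union> {w. x \<le> w \<and> w \<le> y \<and> g x w \<noteq> 0}"
  have finI: "finite I" unfolding I_def using row_finite[OF f] row_finite[OF g] by auto
  have 1: "conv f h x y = (\<Sum>z\<in>I. f x z * h z y)"
    by (rule conv_eq_sum_FI[OF f h finI]) (auto simp: I_def)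
  have 2: "conv g h x y = (\<Sum>z\<in>I. g x z * h z y)"
    by (rule conv_eq_sum_FI[OF g h finI]) (auto simp: I_def)
  have 3: "conv (\<lambda>u v. a * f u v + b * g u v) h x y = (\<Sum>z\<in>I. (a * f x z + b * g x z) * h z y)"
    by (rule conv_eq_sum_FI[OF lin_FI[OF f g] h finI]) (auto simp: I_def)
  show "conv (\<lambda>u v. a * f u v + b * g u v) h x y = a * conv f h x y + b * conv g h x y"
    unfolding 1 2 3 by (simp add: sum.distrib sum_distrib_left algebra_simps)
qed

lemma conv_lin_right:
  assumes f: "f \<in> FI" and g: "g \<in> FI" and h: "h \<in> FI"
  shows "conv h (\<lambda>u v. a * f u v + b * g u v) = (\<lambda>u v. a * conv h f u v + b * conv h g u v)"
proof (intro ext)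
  fix x y :: 'a
  define I where "I = {w. x \<le> w \<and> w \<le> y \<and> h x w \<noteq> 0}"
  have finI: "finite I" unfolding I_def using row_finite[OF h] by auto
  have 1: "conv h f x y = (\<Sum>z\<in>I. h x z * f z y)"
    by (rule conv_eq_sum_FI[OF h f finI]) (auto simp: I_def)
  have 2: "conv h g x y = (\<Sum>z\<in>I. h x z * g z y)"
    by (rule conv_eq_sum_FI[OF h g finI]) (auto simp: I_def)
  have 3: "conv h (\<lambda>u v. a * f u v + b * g u v) x y = (\<Sum>z\<in>I. h x z * (a * f z y + b * g z y))"
    by (rule conv_eq_sum_FI[OF h lin_FI[OF f g] finI]) (auto simp: I_def)
  show "conv h (\<lambda>u v. a * f u v + b * g u v) x y = a * conv h f x y + b * conv h g x y"
    unfolding 1 2 3 by (simp add: sum.distrib sum_distrib_left algebra_simps)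
qed

lemma monoid_FI: "monoid (FI_monoid :: ('a::order \<Rightarrow> 'a \<Rightarrow> 'k::field) monoid)"
  by (rule monoidI) (auto simp: FI_monoid_def conv_FI delta_FI conv_assoc
      conv_delta_left conv_delta_right FI_upper)



lemma conv_add_left:
  assumes "f \<in> FI" "g \<in> FI" "h \<in> FI"
  shows "conv (\<lambda>u v. f u v + g u v) h = (\<lambda>u v. conv f h u v + conv g h u v)"
  using conv_lin_left[OF assms, of 1 1] by simp

lemma conv_diff_left:
  assumes "f \<in> FI" "g \<in> FI" "h \<in> FI"
  shows "conv (\<lambda>u v. f u v - g u v) h = (\<lambda>u v. conv f h u v - conv g h u v)"
  using conv_lin_left[OF assms, of 1 "-1"] by simp

lemma conv_add_right:
  assumes "f \<in> FI" "g \<in> FI" "h \<in> FI"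
  shows "conv h (\<lambda>u v. f u v + g u v) = (\<lambda>u v. conv h f u v + conv h g u v)"
  using conv_lin_right[OF assms, of 1 1] by simp

lemma conv_diff_right:
  assumes "f \<in> FI" "g \<in> FI" "h \<in> FI"
  shows "conv h (\<lambda>u v. f u v - g u v) = (\<lambda>u v. conv h f u v - conv h g u v)"
  using conv_lin_right[OF assms, of 1 "-1"] by simp

lemma diff_FI: "f \<in> FI \<Longrightarrow> g \<in> FI \<Longrightarrow> (\<lambda>u v. f u v - g u v) \<in> FI"
  using lin_FI[of f g 1 "-1"] by simp

lemma add_FI: "f \<in> FI \<Longrightarrow> g \<in> FI \<Longrightarrow> (\<lambda>u v. f u v + g u v) \<in> FI"
  using lin_FI[of f g 1 1] by simp

abbreviation UF :: "('a::order \<Rightarrow> 'a \<Rightarrow> 'k::field) monoid" where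
  "UF \<equiv> units_of FI_monoid"

lemma group_UF: "group UF"
  by (rule monoid.units_group[OF monoid_FI])

lemma UF_carrier: "carrier UF = Units FI_monoid" by (rule units_of_carrier)
lemma UF_mult: "x \<otimes>\<^bsub>UF\<^esub> y = conv x y" by (simp add: units_of_def FI_monoid_def)
lemma UF_one: "\<one>\<^bsub>UF\<^esub> = delta" by (simp add: units_of_def FI_monoid_def)
lemma UF_inv: "x \<in> Units FI_monoid \<Longrightarrow> inv\<^bsub>UF\<^esub> x = inv\<^bsub>FI_monoid\<^esub> x"
  by (rule monoid.units_of_inv[OF monoid_FI])

lemma Units_FI: "x \<in> Units FI_monoid \<Longrightarrow> x \<in> FI"
  by (auto simp: Units_def FI_monoid_def)

lemma Units_inv_FI: "x \<in> Units FI_monoid \<Longrightarrow> inv\<^bsub>FI_monoid\<^esub> x \<in> FI"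
  using monoid.Units_inv_Units[OF monoid_FI] Units_FI by blast

lemma Units_rinv: "x \<in> Units FI_monoid \<Longrightarrow> conv x (inv\<^bsub>FI_monoid\<^esub> x) = delta"
  using monoid.Units_r_inv[OF monoid_FI] by (fastforce simp: FI_monoid_def)

lemma Units_linv: "x \<in> Units FI_monoid \<Longrightarrow> conv (inv\<^bsub>FI_monoid\<^esub> x) x = delta"
  using monoid.Units_l_inv[OF monoid_FI] by (fastforce simp: FI_monoid_def)

lemma Units_mult: "x \<in> Units FI_monoid \<Longrightarrow> y \<in> Units FI_monoid \<Longrightarrow> conv x y \<in> Units FI_monoid"
  using monoid.Units_m_closed[OF monoid_FI] by (fastforce simp: FI_monoid_def)

lemma delta_Units: "delta \<in> Units FI_monoid"
  using monoid.Units_one_closed[OF monoid_FI] by (fastforce simp: FI_monoid_def)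

lemma conv_diag:
  assumes "f \<in> FI" "g \<in> FI" shows "conv f g u u = f u u * g u u"
proof -
  have "conv f g u u = (\<Sum>z\<in>{u}. f u z * g z u)"
    by (rule conv_eq_sum_FI[OF assms]) auto
  then show ?thesis by simp
qed

lemma Units_diag: "x \<in> Units FI_monoid \<Longrightarrow> x u u \<noteq> 0"
  using conv_diag[OF Units_FI Units_inv_FI, of x x u] Units_rinv[of x]
  by (auto simp: delta_def)



inductive Gc :: "nat \<Rightarrow> 'a::order \<Rightarrow> 'a \<Rightarrow> bool" where
  Gc0: "u \<le> v \<Longrightarrow> Gc 0 u v"
| GcS: "Gc k u w \<Longrightarrow> w < v \<Longrightarrow> Gc (Suc k) u v"

lemma Gc_le_right: assumes "Gc k u w" "w \<le> v" shows "Gc k u v"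
  using assms(1)
proof cases
  case Gc0 then show ?thesis using assms(2) by (blast intro: Gc.Gc0 order_trans)
next
  case (GcS k' w') then show ?thesis using assms(2) by (blast intro: Gc.GcS order.strict_trans2)
qed

lemma Gc_down: assumes "Gc (Suc k) u v" shows "Gc k u v"
  using assms
proof cases
  case (GcS w) then show ?thesis by (blast intro: Gc_le_right order.strict_implies_order)
qed

lemma Gc_mono: "Gc (k + m) u v \<Longrightarrow> Gc k u v"
  by (induction m arbitrary: u v) (auto dest: Gc_down)

lemma Gc_mono': "Gc m u v \<Longrightarrow> k \<le> m \<Longrightarrow> Gc k u v"
  using Gc_mono[of k "m - k"] by simp

lemma Gc_trans: "Gc j z v \<Longrightarrow> Gc i u z \<Longrightarrow> Gc (i + j) u v"
proof (induction rule: Gc.induct)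
  case (Gc0 u v) then show ?case by (simp add: Gc_le_right)
next
  case (GcS k u w v) then show ?case by (simp add: Gc.GcS)
qed

lemma Gc_1: "u < v \<Longrightarrow> Gc 1 u v"
  using Gc.GcS[OF Gc.Gc0[of u u]] by simp

definition is_chain :: "'a::order set \<Rightarrow> bool" where
  "is_chain C \<longleftrightarrow> (\<forall>a\<in>C. \<forall>b\<in>C. a \<le> b \<or> b \<le> a)"

lemma Gc_chain:
  "Gc k u v \<Longrightarrow> \<exists>C. finite C \<and> card C = Suc k \<and> is_chain C \<and> (\<forall>c\<in>C. c \<le> v)"
proof (induction rule: Gc.induct)
  case (Gc0 u v) then show ?case by (intro exI[of _ "{v}"]) (simp add: is_chain_def)
next
  case (GcS k u w v)
  then obtain C where C: "finite C" "card C = Suc k" "is_chain C" "\<forall>c\<in>C. c \<le> w"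
    by blast
  have lt: "\<forall>c\<in>C. c < v" using C(4) GcS(2) order.strict_trans1 by blast
  then have "v \<notin> C" by blast
  then have "card (insert v C) = Suc (Suc k)" using C by simp
  moreover have "is_chain (insert v C)" using C(3) lt unfolding is_chain_def
    by (blast intro: order.strict_implies_order)
  moreover have "\<forall>c\<in>insert v C. c \<le> v" using lt by (blast intro: order.strict_implies_order)
  ultimately show ?case using C(1) by (intro exI[of _ "insert v C"]) simp
qed

lemma chain_Gc:
  "finite C \<Longrightarrow> card C = Suc n \<Longrightarrow> is_chain C \<Longrightarrow>
   \<exists>b\<in>C. \<exists>a. Gc n a (b::'a::order) \<and> (\<forall>c\<in>C. c \<le> b)"
proof (induction n arbitrary: C)
  case 0
  then obtain b where "C = {b}" using card_1_singletonE[of C] by auto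
  then show ?case by (auto intro: Gc.Gc0)
next
  case (Suc n)
  have "C \<noteq> {}" using Suc.prems(2) by auto
  then obtain m where m: "m \<in> C" "\<forall>b\<in>C. m \<le> b \<longrightarrow> m = b"
    using finite_has_maximal[OF Suc.prems(1)] by blast
  let ?C = "C - {m}"
  have "card ?C = Suc n" using Suc.prems m by simp
  moreover have "finite ?C" using Suc.prems by simp
  moreover have "is_chain ?C" using Suc.prems(3) by (simp add: is_chain_def)
  ultimately obtain b a where b: "b \<in> ?C" "Gc n a b" "\<forall>c\<in>?C. c \<le> b"
    using Suc.IH[of ?C] by blast
  have "b \<noteq> m" using b(1) by blast
  moreover have "b \<le> m \<or> m \<le> b" using Suc.prems(3) b(1) m(1) unfolding is_chain_def by blast
  ultimately have "b < m" using m(2) b(1) by (auto simp: order.strict_iff_order)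
  then have "Gc (Suc n) a m" using b(2) by (simp add: Gc.GcS)
  moreover have "\<forall>c\<in>C. c \<le> m"
  proof
    fix c assume "c \<in> C"
    then show "c \<le> m" using b(3) \<open>b < m\<close> by (cases "c = m") (auto intro: order_trans order.strict_implies_order)
  qed
  ultimately show ?case using m(1) by blast
qed



definition J :: "nat \<Rightarrow> ('a::order \<Rightarrow> 'a \<Rightarrow> 'k::field) set" where
  "J k = {f. \<forall>u v. f u v \<noteq> 0 \<longrightarrow> Gc k u v}"

lemma FI_J0: assumes "f \<in> FI" shows "f \<in> J 0"
  unfolding J_def
proof (intro CollectI allI impI)
  fix u v assume "f u v \<noteq> 0"
  then have "u \<le> v" using FI_upper[OF assms, of u v] by blast
  then show "Gc 0 u v" by (rule Gc.Gc0)
qed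

lemma conv_J: assumes "f \<in> J i" "g \<in> J j" shows "conv f g \<in> J (i + j)"
  unfolding J_def
proof (intro CollectI allI impI)
  fix u v assume "conv f g u v \<noteq> 0"
  then obtain z where z: "f u z \<noteq> 0" "g z v \<noteq> 0" using conv_nz by blast
  have "Gc i u z" using assms(1) z(1) unfolding J_def by blast
  moreover have "Gc j z v" using assms(2) z(2) unfolding J_def by blast
  ultimately show "Gc (i + j) u v" by (rule Gc_trans[rotated])
qed

lemma J_mono: assumes "f \<in> J m" "k \<le> m" shows "f \<in> J k"
  unfolding J_def
proof (intro CollectI allI impI)
  fix u v assume "f u v \<noteq> 0"
  then have "Gc m u v" using assms(1) unfolding J_def by blast
  then show "Gc k u v" using assms(2) by (rule Gc_mono')
qed

lemma J_lin: "f \<in> J k \<Longrightarrow> g \<in> J k \<Longrightarrow> (\<lambda>u v. a * f u v + b * g u v) \<in> J k"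
proof -
  assume f: "f \<in> J k" and g: "g \<in> J k"
  show ?thesis unfolding J_def
  proof (intro CollectI allI impI)
    fix u v assume "a * f u v + b * g u v \<noteq> 0"
    then have "f u v \<noteq> 0 \<or> g u v \<noteq> 0" by auto
    then show "Gc k u v" using f g unfolding J_def by blast
  qed
qed

lemma J_add: "f \<in> J k \<Longrightarrow> g \<in> J k \<Longrightarrow> (\<lambda>u v. f u v + g u v) \<in> J k"
  using J_lin[of f k g 1 1] by simp

lemma J_diff: "f \<in> J k \<Longrightarrow> g \<in> J k \<Longrightarrow> (\<lambda>u v. f u v - g u v) \<in> J k"
  using J_lin[of f k g 1 "-1"] by simp

lemma J_neg: "f \<in> J k \<Longrightarrow> (\<lambda>u v. - f u v) \<in> J k"
  unfolding J_def by auto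

definition S :: "nat \<Rightarrow> ('a::order \<Rightarrow> 'a \<Rightarrow> 'k::field) set" where
  "S k = {x \<in> Units FI_monoid. (\<lambda>u v. x u v - delta u v) \<in> J k}"

lemma expand_left:
  assumes x: "x \<in> FI" and y: "y \<in> FI"
  shows "conv x y u v = y u v + (x u v - delta u v) + conv (\<lambda>u v. x u v - delta u v) (\<lambda>u v. y u v - delta u v) u v"
proof -
  let ?a = "\<lambda>u v. x u v - delta u v" and ?b = "\<lambda>u v. y u v - delta u v"
  have a: "?a \<in> FI" and b: "?b \<in> FI" using diff_FI x y delta_FI by auto
  have 1: "conv ?a y = (\<lambda>u v. conv x y u v - conv delta y u v)" by (rule conv_diff_left[OF x delta_FI y])
  have 2: "conv ?a ?b = (\<lambda>u v. conv ?a y u v - conv ?a delta u v)" by (rule conv_diff_right[OF y delta_FI a])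
  have d1: "conv delta y = y" by (rule conv_delta_left) (rule FI_upper[OF y])
  have d2: "conv ?a delta = ?a" by (rule conv_delta_right) (rule FI_upper[OF a])
  show ?thesis using d1 d2 fun_cong[OF fun_cong[OF 1, of u], of v] fun_cong[OF fun_cong[OF 2, of u], of v]
    by simp
qed

lemma S_mult:
  assumes "x \<in> S k" "y \<in> S k" shows "conv x y \<in> S k"
proof -
  have xU: "x \<in> Units FI_monoid" and yU: "y \<in> Units FI_monoid"
    and a: "(\<lambda>u v. x u v - delta u v) \<in> J k" and b: "(\<lambda>u v. y u v - delta u v) \<in> J k"
    using assms by (auto simp: S_def)
  have ab: "conv (\<lambda>u v. x u v - delta u v) (\<lambda>u v. y u v - delta u v) \<in> J k"
    using J_mono[OF conv_J[OF a b]] by simp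
  have "(\<lambda>u v. conv x y u v - delta u v) = (\<lambda>u v. (y u v - delta u v) + (x u v - delta u v)
        + conv (\<lambda>u v. x u v - delta u v) (\<lambda>u v. y u v - delta u v) u v)"
    using expand_left[OF Units_FI[OF xU] Units_FI[OF yU]] by (intro ext) simp
  moreover have "\<dots> \<in> J k" by (intro J_add b a ab)
  ultimately show ?thesis using Units_mult[OF xU yU] by (simp add: S_def)
qed

lemma S_inv:
  assumes "x \<in> S k" shows "inv\<^bsub>FI_monoid\<^esub> x \<in> S k"
proof -
  have xU: "x \<in> Units FI_monoid" and a: "(\<lambda>u v. x u v - delta u v) \<in> J k"
    using assms by (auto simp: S_def)
  let ?y = "inv\<^bsub>FI_monoid\<^esub> x"
  have yF: "?y \<in> FI" using Units_inv_FI[OF xU] .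
  have "conv (\<lambda>u v. delta u v - x u v) ?y = (\<lambda>u v. conv delta ?y u v - conv x ?y u v)"
    by (rule conv_diff_left[OF delta_FI Units_FI[OF xU] yF])
  also have "\<dots> = (\<lambda>u v. ?y u v - delta u v)"
    using conv_delta_left[of ?y] FI_upper[OF yF] Units_rinv[OF xU] by simp
  finally have eq: "(\<lambda>u v. ?y u v - delta u v) = conv (\<lambda>u v. delta u v - x u v) ?y" by simp
  have "(\<lambda>u v. delta u v - x u v) \<in> J k" using J_neg[OF a] by simp
  then have "conv (\<lambda>u v. delta u v - x u v) ?y \<in> J (k + 0)" by (intro conv_J FI_J0 yF)
  then show ?thesis using eq monoid.Units_inv_Units[OF monoid_FI xU] by (simp add: S_def)
qed

lemma delta_S: "delta \<in> S k"
  using delta_Units by (simp add: S_def J_def)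

lemma S_comm:
  assumes x: "x \<in> S k" and y: "y \<in> S 1"
  shows "conv (conv (conv x y) (inv\<^bsub>FI_monoid\<^esub> x)) (inv\<^bsub>FI_monoid\<^esub> y) \<in> S (Suc k)"
proof -
  have xU: "x \<in> Units FI_monoid" and yU: "y \<in> Units FI_monoid"
    and a: "(\<lambda>u v. x u v - delta u v) \<in> J k" and b: "(\<lambda>u v. y u v - delta u v) \<in> J 1"
    using assms by (auto simp: S_def)
  let ?x' = "inv\<^bsub>FI_monoid\<^esub> x" and ?y' = "inv\<^bsub>FI_monoid\<^esub> y"
  let ?a = "\<lambda>u v. x u v - delta u v" and ?b = "\<lambda>u v. y u v - delta u v"
  have xF: "x \<in> FI" and yF: "y \<in> FI" and x'F: "?x' \<in> FI" and y'F: "?y' \<in> FI"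
    using Units_FI[OF xU] Units_FI[OF yU] Units_inv_FI[OF xU] Units_inv_FI[OF yU] by auto
  have x'U: "?x' \<in> Units FI_monoid" and y'U: "?y' \<in> Units FI_monoid"
    using monoid.Units_inv_Units[OF monoid_FI xU] monoid.Units_inv_Units[OF monoid_FI yU] by auto
  let ?c = "conv (conv (conv x y) ?x') ?y'"
  have cU: "?c \<in> Units FI_monoid" by (intro Units_mult xU yU x'U y'U)
  have pF: "conv ?x' ?y' \<in> FI" using conv_FI[OF x'F y'F] .
  have e1: "conv (conv x y) (conv ?x' ?y') = ?c"
    by (rule conv_assoc[OF conv_FI[OF xF yF] x'F y'F, symmetric])
  have e2: "conv (conv y x) (conv ?x' ?y') = delta"
  proof -
    have s1: "conv (conv y x) (conv ?x' ?y') = conv (conv (conv y x) ?x') ?y'"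
      by (rule conv_assoc[OF conv_FI[OF yF xF] x'F y'F, symmetric])
    have s2: "conv (conv y x) ?x' = conv y (conv x ?x')"
      by (rule conv_assoc[OF yF xF x'F])
    have s3: "conv y (conv x ?x') = y" using Units_rinv[OF xU] conv_delta_right[of y] FI_upper[OF yF] by simp
    show ?thesis using s1 s2 s3 Units_rinv[OF yU] by simp
  qed
  have "conv (\<lambda>u v. conv x y u v - conv y x u v) (conv ?x' ?y')
      = (\<lambda>u v. conv (conv x y) (conv ?x' ?y') u v - conv (conv y x) (conv ?x' ?y') u v)"
    by (rule conv_diff_left[OF conv_FI[OF xF yF] conv_FI[OF yF xF] pF])
  then have eq: "(\<lambda>u v. ?c u v - delta u v) = conv (\<lambda>u v. conv x y u v - conv y x u v) (conv ?x' ?y')"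
    using e1 e2 by simp
  have "(\<lambda>u v. conv x y u v - conv y x u v) = (\<lambda>u v. conv ?a ?b u v - conv ?b ?a u v)"
    using expand_left[OF xF yF] expand_left[OF yF xF] by (intro ext) simp
  moreover have "conv ?a ?b \<in> J (Suc k)" using conv_J[OF a b] by simp
  moreover have "conv ?b ?a \<in> J (Suc k)" using conv_J[OF b a] by simp
  ultimately have "(\<lambda>u v. conv x y u v - conv y x u v) \<in> J (Suc k)" using J_diff by simp
  then have "conv (\<lambda>u v. conv x y u v - conv y x u v) (conv ?x' ?y') \<in> J (Suc k + 0)"
    by (intro conv_J FI_J0 pF)
  then show ?thesis using eq cU by (simp add: S_def)
qed



lemma F2_vals:
  assumes "card (UNIV :: 'k::field set) = 2" shows "(c::'k) = 0 \<or> c = 1"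
proof -
  have fin: "finite (UNIV :: 'k set)" using assms card.infinite by fastforce
  have "card {0::'k, 1} = 2" by simp
  then have "{0::'k, 1} = UNIV" using card_subset_eq[OF fin, of "{0,1}"] assms by simp
  then show ?thesis by blast
qed

lemma Units_S1:
  assumes k: "card (UNIV :: 'k::field set) = 2" and x: "(x :: 'a::order \<Rightarrow> 'a \<Rightarrow> 'k) \<in> Units FI_monoid"
  shows "x \<in> S 1"
proof -
  have diag: "x u u = 1" for u using Units_diag[OF x, of u] F2_vals[OF k, of "x u u"] by simp
  have "(\<lambda>u v. x u v - delta u v) \<in> J 1"
    unfolding J_def
  proof (intro CollectI allI impI)
    fix u v assume nz: "x u v - delta u v \<noteq> 0"
    then have "u \<noteq> v" using diag by (auto simp: delta_def)
    then have "x u v \<noteq> 0" using nz by (simp add: delta_def)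
    then have "u \<le> v" using FI_upper[OF Units_FI[OF x]] by blast
    then show "Gc 1 u v" using \<open>u \<noteq> v\<close> by (intro Gc_1) (simp add: order.strict_iff_order)
  qed
  then show ?thesis using x by (simp add: S_def)
qed

lemma S_Units: "x \<in> S k \<Longrightarrow> x \<in> Units FI_monoid"
  by (simp add: S_def)

lemma lcs_S:
  assumes k: "card (UNIV :: 'k::field set) = 2"
  shows "lcs (UF :: ('a::order \<Rightarrow> 'a \<Rightarrow> 'k) monoid) n \<subseteq> S (Suc n)"
proof (induction n)
  case 0
  show ?case using Units_S1[OF k] by (auto simp: UF_carrier)
next
  case (Suc n)
  let ?H = "{x \<otimes>\<^bsub>UF\<^esub> y \<otimes>\<^bsub>UF\<^esub> inv\<^bsub>UF\<^esub> x \<otimes>\<^bsub>UF\<^esub> inv\<^bsub>UF\<^esub> y | x y.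
             x \<in> lcs (UF :: ('a \<Rightarrow> 'a \<Rightarrow> 'k) monoid) n \<and> y \<in> carrier UF}"
  have H: "h \<in> S (Suc (Suc n))" if hH: "h \<in> ?H" for h :: "'a \<Rightarrow> 'a \<Rightarrow> 'k"
  proof -
    obtain x y where h: "h = x \<otimes>\<^bsub>UF\<^esub> y \<otimes>\<^bsub>UF\<^esub> inv\<^bsub>UF\<^esub> x \<otimes>\<^bsub>UF\<^esub> inv\<^bsub>UF\<^esub> y"
      and xl: "x \<in> lcs UF n" and yc: "y \<in> carrier UF" using hH by (auto simp only: mem_Collect_eq)
    have xS: "x \<in> S (Suc n)" using Suc.IH xl by blast
    have yU: "y \<in> Units FI_monoid" using yc by (simp add: UF_carrier)
    have yS: "y \<in> S 1" using Units_S1[OF k yU] .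
    have "h = conv (conv (conv x y) (inv\<^bsub>FI_monoid\<^esub> x)) (inv\<^bsub>FI_monoid\<^esub> y)"
      using h UF_inv[OF S_Units[OF xS]] UF_inv[OF yU] by (simp add: UF_mult)
    then show ?thesis using S_comm[OF xS yS] by simp
  qed
  show ?case
  proof
    fix h :: "'a \<Rightarrow> 'a \<Rightarrow> 'k" assume "h \<in> lcs UF (Suc n)"
    then have "h \<in> generate UF ?H" by simp
    then show "h \<in> S (Suc (Suc n))"
    proof (induction rule: generate.induct)
      case one then show ?case by (simp add: UF_one delta_S)
    next
      case (incl h) then show ?case by (rule H)
    next
      case (inv h)
      then have hS: "h \<in> S (Suc (Suc n))" by (rule H)
      then show ?case using UF_inv[OF S_Units[OF hS]] S_inv[OF hS] by simp
    next
      case (eng h1 h2) then show ?case by (simp add: UF_mult S_mult)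
    qed
  qed
qed

lemma delta_lcs: "delta \<in> lcs (UF :: ('a::order \<Rightarrow> 'a \<Rightarrow> 'k::field) monoid) n"
proof (cases n)
  case 0 then show ?thesis using delta_Units by (simp add: UF_carrier)
next
  case (Suc m) then show ?thesis using generate.one[of UF] by (simp add: UF_one)
qed

lemma F2_bounded_nilpotent:
  assumes k: "card (UNIV :: 'k::field set) = 2" and b: "bounded_poset TYPE('a::order)"
  shows "nilpotent_group (UF :: ('a \<Rightarrow> 'a \<Rightarrow> 'k) monoid)"
proof -
  obtain N where N: "\<forall>C :: 'a set. finite C \<and> (\<forall>x\<in>C. \<forall>y\<in>C. x \<le> y \<or> y \<le> x) \<longrightarrow> card C \<le> N + 1"
    using b by (auto simp: bounded_poset_def)
  have noGc: "\<not> Gc (Suc N) u (v::'a)" for u v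
  proof
    assume "Gc (Suc N) u v"
    then obtain C :: "'a set" where "finite C" "card C = Suc (Suc N)" "is_chain C" using Gc_chain by blast
    then have "card C \<le> N + 1" using N unfolding is_chain_def by blast
    then show False using \<open>card C = Suc (Suc N)\<close> by simp
  qed
  have "lcs (UF :: ('a \<Rightarrow> 'a \<Rightarrow> 'k) monoid) N = {delta}"
  proof
    show "lcs (UF :: ('a \<Rightarrow> 'a \<Rightarrow> 'k) monoid) N \<subseteq> {delta}"
    proof
      fix x assume "x \<in> lcs (UF :: ('a \<Rightarrow> 'a \<Rightarrow> 'k) monoid) N"
      then have "x \<in> S (Suc N)" using lcs_S[OF k] by blast
      then have "(\<lambda>u v. x u v - delta u v) \<in> J (Suc N)" by (simp add: S_def)
      then have "x u v = delta u v" for u v using noGc by (auto simp: J_def)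
      then show "x \<in> {delta}" by (auto intro!: ext)
    qed
    show "{delta} \<subseteq> lcs (UF :: ('a \<Rightarrow> 'a \<Rightarrow> 'k) monoid) N" using delta_lcs by blast
  qed
  then show ?thesis by (auto simp: nilpotent_group_def UF_one)
qed



definition Mx :: "'a::order \<Rightarrow> 'a \<Rightarrow> ('a \<Rightarrow> 'k::field) \<Rightarrow> 'k \<Rightarrow> ('a \<Rightarrow> 'a \<Rightarrow> 'k)" where
  "Mx a b p s = (\<lambda>u v. (if u = v then p u else 0) + (if u = a \<and> v = b then s else 0))"

lemma Mx_FI: assumes "a < b" shows "Mx a b p s \<in> FI"
proof (rule FI_I)
  show "\<not> u \<le> v \<Longrightarrow> Mx a b p s u v = 0" for u v using assms by (auto simp: Mx_def)
  fix x y :: 'a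
  have "{(u, v). x \<le> u \<and> u < v \<and> v \<le> y \<and> Mx a b p s u v \<noteq> 0} \<subseteq> {(a, b)}"
    by (auto simp: Mx_def split: if_splits)
  then show "finite {(u, v). x \<le> u \<and> u < v \<and> v \<le> y \<and> Mx a b p s u v \<noteq> 0}"
    using finite_subset by blast
qed

lemma Mx_mult:
  assumes ab: "a < b"
  shows "conv (Mx a b p s) (Mx a b q t) = Mx a b (\<lambda>u. p u * q u) (p a * t + s * q b)"
proof (intro ext)
  fix u v :: 'a
  have ne: "a \<noteq> b" using ab by simp
  have "conv (Mx a b p s) (Mx a b q t) u v = (\<Sum>z\<in>{u, b}. Mx a b p s u z * Mx a b q t z v)"
    by (rule conv_eq_sum_FI[OF Mx_FI[OF ab] Mx_FI[OF ab]]) (auto simp: Mx_def split: if_splits)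
  also have "\<dots> = Mx a b (\<lambda>u. p u * q u) (p a * t + s * q b) u v"
    using ne by (cases "u = b") (auto simp: Mx_def algebra_simps)
  finally show "conv (Mx a b p s) (Mx a b q t) u v = Mx a b (\<lambda>u. p u * q u) (p a * t + s * q b) u v" .
qed

lemma Mx_one: "Mx a b (\<lambda>_. 1) 0 = delta"
  by (auto simp: Mx_def delta_def intro!: ext)

lemma Mx_cong: "p = p' \<Longrightarrow> s = s' \<Longrightarrow> Mx a b p s = Mx a b p' s'" by simp

lemma Mx_inv_prod:
  assumes ab: "a < b" and p: "\<And>u. p u \<noteq> 0"
  shows "conv (Mx a b p s) (Mx a b (\<lambda>u. inverse (p u)) (- s / (p a * p b))) = delta"
    "conv (Mx a b (\<lambda>u. inverse (p u)) (- s / (p a * p b))) (Mx a b p s) = delta"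
proof -
  have pa: "p a \<noteq> 0" and pb: "p b \<noteq> 0" using p by auto
  show "conv (Mx a b p s) (Mx a b (\<lambda>u. inverse (p u)) (- s / (p a * p b))) = delta"
    unfolding Mx_mult[OF ab] Mx_one[of a b, symmetric]
    by (rule Mx_cong) (use p pa pb in \<open>auto simp: field_simps\<close>)
  show "conv (Mx a b (\<lambda>u. inverse (p u)) (- s / (p a * p b))) (Mx a b p s) = delta"
    unfolding Mx_mult[OF ab] Mx_one[of a b, symmetric]
    by (rule Mx_cong) (use p pa pb in \<open>auto simp: field_simps\<close>)
qed

lemma Mx_Units:
  assumes ab: "a < b" and p: "\<And>u. p u \<noteq> 0"
  shows "Mx a b p s \<in> Units FI_monoid"
proof -
  have "Mx a b (\<lambda>u. inverse (p u)) (- s / (p a * p b)) \<in> FI" by (rule Mx_FI[OF ab])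
  then show ?thesis
    using Mx_inv_prod[of a b p s, OF ab p] Mx_FI[of a b p s, OF ab]
    unfolding Units_def FI_monoid_def by auto
qed

lemma Mx_inv:
  assumes ab: "a < b" and p: "\<And>u. p u \<noteq> 0"
  shows "inv\<^bsub>UF\<^esub> (Mx a b p s) = Mx a b (\<lambda>u. inverse (p u)) (- s / (p a * p b))"
proof (rule group.inv_equality[OF group_UF])
  show "Mx a b (\<lambda>u. inverse (p u)) (- s / (p a * p b)) \<otimes>\<^bsub>UF\<^esub> Mx a b p s = \<one>\<^bsub>UF\<^esub>"
    using Mx_inv_prod(2)[OF ab p] by (simp add: UF_mult UF_one)
  show "Mx a b p s \<in> carrier UF" using Mx_Units[OF ab p] by (simp add: UF_carrier)
  have "(\<lambda>u. inverse (p u)) u \<noteq> 0" for u using p by simp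
  then show "Mx a b (\<lambda>u. inverse (p u)) (- s / (p a * p b)) \<in> carrier UF"
    using Mx_Units[of a b "\<lambda>u. inverse (p u)" "- s / (p a * p b)", OF ab] by (simp add: UF_carrier)
qed

lemma not_F2_not_nilpotent:
  assumes ne: "\<not> antichain_type TYPE('a::order)" and k: "card (UNIV :: 'k::field set) \<noteq> 2"
  shows "\<not> nilpotent_group (UF :: ('a \<Rightarrow> 'a \<Rightarrow> 'k) monoid)"
proof -
  obtain x y :: 'a where xy: "x < y" using ne unfolding antichain_type_def
    using order.not_eq_order_implies_strict by blast
  obtain c :: 'k where c0: "c \<noteq> 0" and c1: "c \<noteq> 1"
  proof (rule ccontr)
    assume "\<not> thesis"
    then have "\<forall>c::'k. c = 0 \<or> c = 1" using that by blast
    then have "(UNIV :: 'k set) = {0, 1}" by auto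
    then have "card (UNIV :: 'k set) = card ({0, 1} :: 'k set)" by (rule arg_cong)
    then have "card (UNIV :: 'k set) = 2" by simp
    then show False using k by simp
  qed
  define d where "d = (\<lambda>u. if u = x then c else (1::'k))"
  have d0: "d u \<noteq> 0" for u using c0 by (simp add: d_def)
  have dx: "d x = c" and dy: "d y = 1" using xy by (auto simp: d_def)
  define E where "E = (\<lambda>t. Mx x y (\<lambda>_. 1::'k) t)"
  define D where "D = Mx x y d 0"
  have one0: "(\<lambda>_::'a. 1::'k) u \<noteq> 0" for u by simp
  have EU: "E t \<in> carrier UF" for t using Mx_Units[OF xy one0] by (simp add: E_def UF_carrier)
  have DU: "D \<in> carrier UF" using Mx_Units[OF xy d0] by (simp add: D_def UF_carrier)
  have comm: "E t \<otimes>\<^bsub>UF\<^esub> D \<otimes>\<^bsub>UF\<^esub> inv\<^bsub>UF\<^esub> (E t) \<otimes>\<^bsub>UF\<^esub> inv\<^bsub>UF\<^esub> D = E (t * (1 - c))" for t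
  proof -
    have iE: "inv\<^bsub>UF\<^esub> (E t) = Mx x y (\<lambda>_. 1) (- t)"
      unfolding E_def using Mx_inv[of x y "\<lambda>_. 1" t, OF xy one0] by simp
    have iD: "inv\<^bsub>UF\<^esub> D = Mx x y (\<lambda>u. inverse (d u)) 0"
      unfolding D_def using Mx_inv[of x y d 0, OF xy d0] by simp
    show ?thesis
      unfolding iE iD UF_mult unfolding E_def D_def Mx_mult[OF xy]
      by (rule Mx_cong) (use d0 dx dy in \<open>auto simp: algebra_simps\<close>)
  qed
  have inl: "E ((1 - c) ^ n) \<in> lcs UF n" for n
  proof (induction n)
    case 0 then show ?case using EU by simp
  next
    case (Suc n)
    have "E ((1 - c) ^ Suc n) = E ((1 - c) ^ n) \<otimes>\<^bsub>UF\<^esub> D \<otimes>\<^bsub>UF\<^esub> inv\<^bsub>UF\<^esub> (E ((1 - c) ^ n)) \<otimes>\<^bsub>UF\<^esub> inv\<^bsub>UF\<^esub> D"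
      using comm[of "(1 - c) ^ n"] by (simp add: mult.commute)
    then have "E ((1 - c) ^ Suc n) \<in> {a \<otimes>\<^bsub>UF\<^esub> b \<otimes>\<^bsub>UF\<^esub> inv\<^bsub>UF\<^esub> a \<otimes>\<^bsub>UF\<^esub> inv\<^bsub>UF\<^esub> b | a b.
             a \<in> lcs (UF :: ('a \<Rightarrow> 'a \<Rightarrow> 'k) monoid) n \<and> b \<in> carrier UF}"
      using Suc.IH DU by blast
    then show ?case by (simp add: generate.incl)
  qed
  have "E ((1 - c) ^ n) \<noteq> delta" for n
  proof
    assume "E ((1 - c) ^ n) = delta"
    then have "E ((1 - c) ^ n) x y = delta x y" by simp
    then have "(1 - c) ^ n = 0" using xy by (simp add: E_def Mx_def delta_def)
    then show False using c1 by simp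
  qed
  then have "lcs (UF :: ('a \<Rightarrow> 'a \<Rightarrow> 'k) monoid) n \<noteq> {delta}" for n using inl[of n] by blast
  then show ?thesis by (simp add: nilpotent_group_def UF_one)
qed



definition Nh :: "'a::order \<Rightarrow> 'a \<Rightarrow> 'a \<Rightarrow> 'k::field \<Rightarrow> 'k \<Rightarrow> 'k \<Rightarrow> ('a \<Rightarrow> 'a \<Rightarrow> 'k)" where
  "Nh a b c \<alpha> \<beta> \<gamma> = (\<lambda>u v. delta u v + (if u = a \<and> v = b then \<alpha> else 0)
      + (if u = b \<and> v = c then \<beta> else 0) + (if u = a \<and> v = c then \<gamma> else 0))"

lemma Nh_FI: assumes "a < b" "b < c" shows "Nh a b c \<alpha> \<beta> \<gamma> \<in> FI"
proof (rule FI_I)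
  have "a < c" using assms by simp
  then show "\<not> u \<le> v \<Longrightarrow> Nh a b c \<alpha> \<beta> \<gamma> u v = 0" for u v using assms
    by (auto simp: Nh_def delta_def)
  fix x y :: 'a
  have "{(u, v). x \<le> u \<and> u < v \<and> v \<le> y \<and> Nh a b c \<alpha> \<beta> \<gamma> u v \<noteq> 0} \<subseteq> {(a, b), (b, c), (a, c)}"
    by (auto simp: Nh_def delta_def split: if_splits)
  then show "finite {(u, v). x \<le> u \<and> u < v \<and> v \<le> y \<and> Nh a b c \<alpha> \<beta> \<gamma> u v \<noteq> 0}"
    using finite_subset by blast
qed

lemma Nh_mult:
  assumes ab: "a < b" and bc: "b < c"
  shows "conv (Nh a b c \<alpha> \<beta> \<gamma>) (Nh a b c \<alpha>' \<beta>' \<gamma>') = Nh a b c (\<alpha> + \<alpha>') (\<beta> + \<beta>') (\<gamma> + \<gamma>' + \<alpha> * \<beta>')"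
proof (intro ext)
  fix u v :: 'a
  have ne: "a \<noteq> b" "b \<noteq> c" "a \<noteq> c" using ab bc by auto
  have "conv (Nh a b c \<alpha> \<beta> \<gamma>) (Nh a b c \<alpha>' \<beta>' \<gamma>') u v
      = (\<Sum>z\<in>{u, b, c}. Nh a b c \<alpha> \<beta> \<gamma> u z * Nh a b c \<alpha>' \<beta>' \<gamma>' z v)"
    by (rule conv_eq_sum_FI[OF Nh_FI[OF ab bc] Nh_FI[OF ab bc]]) (auto simp: Nh_def delta_def split: if_splits)
  also have "\<dots> = Nh a b c (\<alpha> + \<alpha>') (\<beta> + \<beta>') (\<gamma> + \<gamma>' + \<alpha> * \<beta>') u v"
  proof (cases "u = c")
    case True
    then have "{u, b, c} = {b, c}" by auto
    then show ?thesis using ne True by (auto simp: Nh_def delta_def algebra_simps)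
  next
    case False
    then show ?thesis using ne by (cases "u = b") (auto simp: Nh_def delta_def algebra_simps)
  qed
  finally show "conv (Nh a b c \<alpha> \<beta> \<gamma>) (Nh a b c \<alpha>' \<beta>' \<gamma>') u v
      = Nh a b c (\<alpha> + \<alpha>') (\<beta> + \<beta>') (\<gamma> + \<gamma>' + \<alpha> * \<beta>') u v" .
qed

lemma Nh_one: "Nh a b c 0 0 0 = delta"
  by (auto simp: Nh_def intro!: ext)

definition Tr :: "'a::order \<Rightarrow> 'a \<Rightarrow> ('a \<Rightarrow> 'a \<Rightarrow> 'k::field)" where
  "Tr a b = (\<lambda>u v. delta u v + (if u = a \<and> v = b then 1 else 0))"

lemma Tr_Mx: "Tr a b = Mx a b (\<lambda>_. 1) 1"
  by (auto simp: Tr_def Mx_def delta_def intro!: ext)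

lemma Tr_carrier: "a < b \<Longrightarrow> Tr a b \<in> carrier UF"
  using Mx_Units[of a b "\<lambda>_. 1" 1] by (simp add: Tr_Mx UF_carrier)

lemma Nh_carrier:
  assumes ab: "a < b" and bc: "b < c"
  shows "Nh a b c \<alpha> \<beta> \<gamma> \<in> carrier UF"
proof -
  have "conv (Nh a b c \<alpha> \<beta> \<gamma>) (Nh a b c (- \<alpha>) (- \<beta>) (\<alpha> * \<beta> - \<gamma>)) = delta"
    "conv (Nh a b c (- \<alpha>) (- \<beta>) (\<alpha> * \<beta> - \<gamma>)) (Nh a b c \<alpha> \<beta> \<gamma>) = delta"
    unfolding Nh_mult[OF ab bc] Nh_one[of a b c, symmetric] by (simp_all add: algebra_simps)
  then have "Nh a b c \<alpha> \<beta> \<gamma> \<in> Units FI_monoid"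
    using Nh_FI[OF ab bc, of \<alpha> \<beta> \<gamma>] Nh_FI[OF ab bc, of "- \<alpha>" "- \<beta>" "\<alpha> * \<beta> - \<gamma>"]
    unfolding Units_def FI_monoid_def by auto
  then show ?thesis by (simp add: UF_carrier)
qed

lemma Nh_inv:
  assumes ab: "a < b" and bc: "b < c"
  shows "inv\<^bsub>UF\<^esub> (Nh a b c \<alpha> \<beta> \<gamma>) = Nh a b c (- \<alpha>) (- \<beta>) (\<alpha> * \<beta> - \<gamma>)"
proof (rule group.inv_equality[OF group_UF])
  show "Nh a b c (- \<alpha>) (- \<beta>) (\<alpha> * \<beta> - \<gamma>) \<otimes>\<^bsub>UF\<^esub> Nh a b c \<alpha> \<beta> \<gamma> = \<one>\<^bsub>UF\<^esub>"
    unfolding UF_mult UF_one Nh_mult[OF ab bc] Nh_one[of a b c, symmetric] by (simp add: algebra_simps)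
qed (rule Nh_carrier[OF ab bc])+

lemma Tr_comm:
  assumes ab: "a < b" and bc: "b < c"
  shows "Tr a b \<otimes>\<^bsub>UF\<^esub> Tr b c \<otimes>\<^bsub>UF\<^esub> inv\<^bsub>UF\<^esub> (Tr a b) \<otimes>\<^bsub>UF\<^esub> inv\<^bsub>UF\<^esub> (Tr b c) = (Tr a c :: 'a::order \<Rightarrow> 'a \<Rightarrow> 'k::field)"
proof -
  have ne: "a \<noteq> b" "b \<noteq> c" "a \<noteq> c" using ab bc by auto
  have 1: "Tr a b = (Nh a b c 1 0 0 :: 'a \<Rightarrow> 'a \<Rightarrow> 'k)" using ne by (auto simp: Tr_def Nh_def intro!: ext)
  have 2: "Tr b c = (Nh a b c 0 1 0 :: 'a \<Rightarrow> 'a \<Rightarrow> 'k)" using ne by (auto simp: Tr_def Nh_def intro!: ext)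
  have 3: "Tr a c = (Nh a b c 0 0 1 :: 'a \<Rightarrow> 'a \<Rightarrow> 'k)" using ne by (auto simp: Tr_def Nh_def intro!: ext)
  show ?thesis unfolding 1 2 3 Nh_inv[OF ab bc] UF_mult Nh_mult[OF ab bc] by simp
qed

lemma Gc_Tr_lcs:
  "Gc (Suc n) a b \<Longrightarrow> \<exists>a'. a' < b \<and> (Tr a' b :: 'a::order \<Rightarrow> 'a \<Rightarrow> 'k::field) \<in> lcs UF n"
proof (induction n arbitrary: b)
  case 0
  from 0 obtain w where "w < b" by (cases rule: Gc.cases) auto
  then have "Tr w b \<in> lcs (UF :: ('a \<Rightarrow> 'a \<Rightarrow> 'k) monoid) 0" using Tr_carrier[of w b] by simp
  then show ?case using \<open>w < b\<close> by blast
next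
  case (Suc n)
  from Suc.prems obtain w where w: "Gc (Suc n) a w" "w < b" by (cases rule: Gc.cases) auto
  then obtain a' where a': "a' < w" "(Tr a' w :: 'a \<Rightarrow> 'a \<Rightarrow> 'k) \<in> lcs UF n" using Suc.IH by blast
  have "(Tr a' b :: 'a \<Rightarrow> 'a \<Rightarrow> 'k) = Tr a' w \<otimes>\<^bsub>UF\<^esub> Tr w b \<otimes>\<^bsub>UF\<^esub> inv\<^bsub>UF\<^esub> (Tr a' w) \<otimes>\<^bsub>UF\<^esub> inv\<^bsub>UF\<^esub> (Tr w b)"
    by (rule Tr_comm[OF a'(1) w(2), symmetric])
  then have "(Tr a' b :: 'a \<Rightarrow> 'a \<Rightarrow> 'k) \<in> {x \<otimes>\<^bsub>UF\<^esub> y \<otimes>\<^bsub>UF\<^esub> inv\<^bsub>UF\<^esub> x \<otimes>\<^bsub>UF\<^esub> inv\<^bsub>UF\<^esub> y | x y.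
             x \<in> lcs (UF :: ('a \<Rightarrow> 'a \<Rightarrow> 'k) monoid) n \<and> y \<in> carrier UF}"
    using a'(2) Tr_carrier[OF w(2)] by blast
  then have "(Tr a' b :: 'a \<Rightarrow> 'a \<Rightarrow> 'k) \<in> lcs UF (Suc n)" by (simp add: generate.incl)
  moreover have "a' < b" using a'(1) w(2) by simp
  ultimately show ?case by blast
qed

lemma unbounded_not_nilpotent:
  assumes nb: "\<not> bounded_poset TYPE('a::order)"
  shows "\<not> nilpotent_group (UF :: ('a \<Rightarrow> 'a \<Rightarrow> 'k::field) monoid)"
proof -
  have "lcs (UF :: ('a \<Rightarrow> 'a \<Rightarrow> 'k) monoid) n \<noteq> {delta}" for n
  proof -
    have "\<not> (\<forall>C :: 'a set. finite C \<and> (\<forall>x\<in>C. \<forall>y\<in>C. x \<le> y \<or> y \<le> x) \<longrightarrow> card C \<le> n + 1)"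
    proof
      assume "\<forall>C :: 'a set. finite C \<and> (\<forall>x\<in>C. \<forall>y\<in>C. x \<le> y \<or> y \<le> x) \<longrightarrow> card C \<le> n + 1"
      then have "bounded_poset TYPE('a)" unfolding bounded_poset_def by (rule exI[of _ n])
      then show False using nb by contradiction
    qed
    then obtain C :: "'a set" where C: "finite C" "\<forall>x\<in>C. \<forall>y\<in>C. x \<le> y \<or> y \<le> x" "\<not> card C \<le> n + 1"
      by blast
    obtain m where m: "card C = Suc m" using C(3) by (cases "card C") auto
    have ch: "is_chain C" using C(2) by (simp add: is_chain_def)
    obtain b a where "Gc m a (b::'a)" using chain_Gc[OF C(1) m ch] by blast
    moreover have "Suc n \<le> m" using C(3) m by simp
    ultimately have "Gc (Suc n) a b" by (rule Gc_mono')
    then obtain a' where a': "a' < b" "(Tr a' b :: 'a \<Rightarrow> 'a \<Rightarrow> 'k) \<in> lcs UF n"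
      using Gc_Tr_lcs by blast
    have "(Tr a' b :: 'a \<Rightarrow> 'a \<Rightarrow> 'k) a' b = 1" using a'(1) by (simp add: Tr_def delta_def)
    moreover have "(delta :: 'a \<Rightarrow> 'a \<Rightarrow> 'k) a' b = 0" using a'(1) by (simp add: delta_def)
    ultimately have "(Tr a' b :: 'a \<Rightarrow> 'a \<Rightarrow> 'k) \<noteq> delta" by auto
    then show ?thesis using a'(2) by blast
  qed
  then show ?thesis by (simp add: nilpotent_group_def UF_one)
qed



lemma anti_le: "antichain_type TYPE('a::order) \<Longrightarrow> (u::'a) \<le> v \<Longrightarrow> u = v"
  by (simp add: antichain_type_def)

lemma anti_offdiag:
  assumes "antichain_type TYPE('a::order)" "f \<in> FI" "(u::'a) \<noteq> v" shows "f u v = 0"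
  using assms FI_upper anti_le by blast

lemma anti_conv:
  assumes an: "antichain_type TYPE('a::order)" and f: "f \<in> FI" and g: "g \<in> FI"
  shows "conv f g (u::'a) v = f u u * g u v"
proof -
  have "conv f g u v = (\<Sum>z\<in>{u}. f u z * g z v)"
    by (rule conv_eq_sum_FI[OF f g]) (use anti_le[OF an] in auto)
  then show ?thesis by simp
qed

lemma anti_comm:
  assumes an: "antichain_type TYPE('a::order)" and f: "f \<in> FI" and g: "g \<in> FI"
  shows "conv f g = conv g (f :: 'a \<Rightarrow> 'a \<Rightarrow> 'k::field)"
proof (intro ext)
  fix u v :: 'a
  show "conv f g u v = conv g f u v"
    unfolding anti_conv[OF an f g] anti_conv[OF an g f]
    by (cases "u = v") (auto simp: anti_offdiag[OF an f] anti_offdiag[OF an g])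
qed

lemma kspan_zero_set: "kspan {\<lambda>(x::'a) (y::'a). (0::'k::field)} = {\<lambda>x y. 0}"
proof
  show "kspan {\<lambda>(x::'a) (y::'a). (0::'k)} \<subseteq> {\<lambda>x y. 0}"
  proof
    fix t :: "'a \<Rightarrow> 'a \<Rightarrow> 'k" assume "t \<in> kspan {\<lambda>x y. 0}"
    then show "t \<in> {\<lambda>x y. 0}" by (induction rule: kspan.induct) auto
  qed
  show "{\<lambda>x y. 0} \<subseteq> kspan {\<lambda>(x::'a) (y::'a). (0::'k)}" using kspan_zero by blast
qed

lemma part1_anti:
  assumes an: "antichain_type TYPE('a::order)"
  shows "lie_nilpotent_FI TYPE('a) TYPE('k::field)"
proof -
  have "{(\<lambda>x y. conv a b x y - conv b a x y) | a b. a \<in> (lie_gamma 0 :: ('a \<Rightarrow> 'a \<Rightarrow> 'k) set) \<and> b \<in> FI}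
        = {\<lambda>x y. 0}" (is "?L = _")
  proof
    show "?L \<subseteq> {\<lambda>x y. 0}"
    proof
      fix t assume "t \<in> ?L"
      then obtain a b where t: "t = (\<lambda>x y. conv a b x y - conv b a x y)" "a \<in> FI" "b \<in> FI" by auto
      then have "conv a b = conv b a" using anti_comm[OF an] by blast
      then show "t \<in> {\<lambda>x y. 0}" using t(1) by simp
    qed
    have "\<exists>a b. (\<lambda>x y. 0::'k) = (\<lambda>x y. conv a b x y - conv b a x y) \<and> a \<in> (lie_gamma 0 :: ('a \<Rightarrow> 'a \<Rightarrow> 'k) set) \<and> b \<in> FI"
      using delta_FI by (intro exI[of _ delta]) simp
    then show "{\<lambda>x y. 0} \<subseteq> ?L" by blast
  qed
  then have "(lie_gamma 1 :: ('a \<Rightarrow> 'a \<Rightarrow> 'k) set) = {\<lambda>x y. 0}"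
    by (simp add: kspan_zero_set)
  then show ?thesis unfolding lie_nilpotent_FI_def by blast
qed

lemma part1_nonanti:
  assumes ne: "\<not> antichain_type TYPE('a::order)"
  shows "\<not> lie_nilpotent_FI TYPE('a) TYPE('k::field)"
proof -
  obtain x y :: 'a where xy: "x < y" using ne unfolding antichain_type_def
    using order.not_eq_order_implies_strict by blast
  define e where "e = (\<lambda>u v. if u = x \<and> v = y then 1 else (0::'k))"
  define d where "d = (\<lambda>u v. if u = y \<and> v = y then 1 else (0::'k))"
  have eF: "e \<in> FI"
  proof (rule FI_I)
    show "\<not> u \<le> v \<Longrightarrow> e u v = 0" for u v using xy by (auto simp: e_def)
    fix a b :: 'a
    have "{(u, v). a \<le> u \<and> u < v \<and> v \<le> b \<and> e u v \<noteq> 0} \<subseteq> {(x, y)}" by (auto simp: e_def split: if_splits)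
    then show "finite {(u, v). a \<le> u \<and> u < v \<and> v \<le> b \<and> e u v \<noteq> 0}" using finite_subset by blast
  qed
  have dF: "d \<in> FI"
  proof (rule FI_I)
    show "\<not> u \<le> v \<Longrightarrow> d u v = 0" for u v by (auto simp: d_def)
    fix a b :: 'a
    show "finite {(u, v). a \<le> u \<and> u < v \<and> v \<le> b \<and> d u v \<noteq> 0}"
      by (rule finite_subset[of _ "{}"]) (auto simp: d_def)
  qed
  have ed: "conv e d u v = e u v" for u v
  proof -
    have "conv e d u v = (\<Sum>z\<in>{y}. e u z * d z v)"
      by (rule conv_eq_sum_FI[OF eF dF]) (auto simp: e_def split: if_splits)
    then show ?thesis by (simp add: e_def d_def)
  qed
  have de: "conv d e u v = 0" for u v
  proof -
    have "conv d e u v = (\<Sum>z\<in>{y}. d u z * e z v)"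
      by (rule conv_eq_sum_FI[OF dF eF]) (auto simp: d_def split: if_splits)
    moreover have "y \<noteq> x" using xy by simp
    ultimately show ?thesis by (simp add: e_def d_def)
  qed
  have inl: "e \<in> lie_gamma n" for n
  proof (induction n)
    case 0 then show ?case using eF by simp
  next
    case (Suc n)
    have s: "(\<lambda>u v. conv e d u v - conv d e u v)
       \<in> {(\<lambda>x y. conv a b x y - conv b a x y) | a b. a \<in> (lie_gamma n :: ('a \<Rightarrow> 'a \<Rightarrow> 'k) set) \<and> b \<in> FI}"
      using Suc.IH dF by blast
    have "(\<lambda>u v. 1 * (conv e d u v - conv d e u v) + (\<lambda>x y. 0) u v)
       \<in> kspan {(\<lambda>x y. conv a b x y - conv b a x y) | a b. a \<in> (lie_gamma n :: ('a \<Rightarrow> 'a \<Rightarrow> 'k) set) \<and> b \<in> FI}"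
      by (rule kspan_step[OF s kspan_zero])
    moreover have "(\<lambda>u v. 1 * (conv e d u v - conv d e u v) + (\<lambda>x y. 0) u v) = e"
      by (intro ext) (simp add: ed de)
    ultimately show ?case by simp
  qed
  have "e \<noteq> (\<lambda>x y. 0)"
  proof
    assume "e = (\<lambda>x y. 0)"
    then have "e x y = 0" by simp
    then show False by (simp add: e_def)
  qed
  then have "(lie_gamma n :: ('a \<Rightarrow> 'a \<Rightarrow> 'k) set) \<noteq> {\<lambda>x y. 0}" for n using inl[of n] by blast
  then show ?thesis unfolding lie_nilpotent_FI_def by blast
qed

lemma part2_anti:
  assumes an: "antichain_type TYPE('a::order)"
  shows "nilpotent_group (UF :: ('a \<Rightarrow> 'a \<Rightarrow> 'k::field) monoid)"
proof -
  let ?H = "{x \<otimes>\<^bsub>UF\<^esub> y \<otimes>\<^bsub>UF\<^esub> inv\<^bsub>UF\<^esub> x \<otimes>\<^bsub>UF\<^esub> inv\<^bsub>UF\<^esub> y | x y.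
             x \<in> lcs (UF :: ('a \<Rightarrow> 'a \<Rightarrow> 'k) monoid) 0 \<and> y \<in> carrier UF}"
  have H: "h = delta" if hH: "h \<in> ?H" for h
  proof -
    obtain x y where h: "h = x \<otimes>\<^bsub>UF\<^esub> y \<otimes>\<^bsub>UF\<^esub> inv\<^bsub>UF\<^esub> x \<otimes>\<^bsub>UF\<^esub> inv\<^bsub>UF\<^esub> y"
      and xc: "x \<in> carrier UF" and yc: "y \<in> carrier UF" using hH by (auto simp only: mem_Collect_eq lcs.simps)
    have xU: "x \<in> Units FI_monoid" and yU: "y \<in> Units FI_monoid" using xc yc by (auto simp: UF_carrier)
    let ?x' = "inv\<^bsub>FI_monoid\<^esub> x" and ?y' = "inv\<^bsub>FI_monoid\<^esub> y"
    have xF: "x \<in> FI" and yF: "y \<in> FI" and x'F: "?x' \<in> FI" and y'F: "?y' \<in> FI"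
      using Units_FI[OF xU] Units_FI[OF yU] Units_inv_FI[OF xU] Units_inv_FI[OF yU] by auto
    have "h = conv (conv (conv x y) ?x') ?y'"
      using h UF_inv[OF xU] UF_inv[OF yU] by (simp add: UF_mult)
    also have "conv x y = conv y x" by (rule anti_comm[OF an xF yF])
    also have "conv (conv y x) ?x' = conv y (conv x ?x')" by (rule conv_assoc[OF yF xF x'F])
    also have "conv x ?x' = delta" by (rule Units_rinv[OF xU])
    also have "conv y delta = y" by (rule conv_delta_right) (rule FI_upper[OF yF])
    also have "conv y ?y' = delta" by (rule Units_rinv[OF yU])
    finally show ?thesis .
  qed
  have "lcs (UF :: ('a \<Rightarrow> 'a \<Rightarrow> 'k) monoid) 1 = {delta}"
  proof
    show "lcs (UF :: ('a \<Rightarrow> 'a \<Rightarrow> 'k) monoid) 1 \<subseteq> {delta}"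
    proof
      fix h :: "'a \<Rightarrow> 'a \<Rightarrow> 'k" assume "h \<in> lcs UF 1"
      then have "h \<in> generate UF ?H" by simp
      then show "h \<in> {delta}"
      proof (induction rule: generate.induct)
        case one then show ?case by (simp add: UF_one)
      next
        case (incl h) then show ?case using H by blast
      next
        case (inv h)
        then have "h = delta" using H by blast
        then show ?case using monoid.inv_one[OF group.is_monoid[OF group_UF]] by (simp add: UF_one)
      next
        case (eng h1 h2)
        have "conv delta delta = (delta :: 'a \<Rightarrow> 'a \<Rightarrow> 'k)" by (rule conv_delta_left) (rule FI_upper[OF delta_FI])
        then show ?case using eng by (simp add: UF_mult)
      qed
    qed
    show "{delta} \<subseteq> lcs (UF :: ('a \<Rightarrow> 'a \<Rightarrow> 'k) monoid) 1" using delta_lcs by blast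
  qed
  then show ?thesis unfolding nilpotent_group_def UF_one by blast
qed

theorem corollary1p9:
  shows "(lie_nilpotent_FI TYPE('a::order) TYPE('k::field) \<longleftrightarrow> antichain_type TYPE('a)) \<and>
         (nilpotent_group (units_of (FI_monoid :: ('a \<Rightarrow> 'a \<Rightarrow> 'k) monoid)) \<longleftrightarrow>
           (antichain_type TYPE('a) \<or> (card (UNIV :: 'k set) = 2 \<and> bounded_poset TYPE('a))))"
proof (intro conjI iffI)
  show "lie_nilpotent_FI TYPE('a) TYPE('k) \<Longrightarrow> antichain_type TYPE('a)"
    using part1_nonanti by blast
  show "antichain_type TYPE('a) \<Longrightarrow> lie_nilpotent_FI TYPE('a) TYPE('k)"
    by (rule part1_anti)
  show "antichain_type TYPE('a) \<or> card (UNIV :: 'k set) = 2 \<and> bounded_poset TYPE('a)"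
    if "nilpotent_group (units_of (FI_monoid :: ('a \<Rightarrow> 'a \<Rightarrow> 'k) monoid))"
    using that not_F2_not_nilpotent unbounded_not_nilpotent by blast
  show "nilpotent_group (units_of (FI_monoid :: ('a \<Rightarrow> 'a \<Rightarrow> 'k) monoid))"
    if "antichain_type TYPE('a) \<or> card (UNIV :: 'k set) = 2 \<and> bounded_poset TYPE('a)"
    using that part2_anti F2_bounded_nilpotent by blast
qed

end
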